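(* Let $H=(V,E)$ be an $\alpha$-acyclic hypergraph and let $T=(E,\mathcal{E})$ be a join tree of $H$. Define \[\mathrm{MC}^H_\cap=\Big\{w\in\mathbb{R}^{\mathcal{J}^H}_{\ge 0}\ \Big|\ w(I)=1\ \forall I\in V;\ w_i-\sum_{J\in\mathcal{J}^e:\, J\ni i}w_J=0\ \forall e\in E,\ i\in I\in e;\ \sum_{J\in\mathcal{J}^e:\,J\supseteq J_0}w_J-\sum_{J\in\mathcal{J}^{e'}:\,J\supseteq J_0}w_J=0\ \forall e,e'\in E \text{ with } |e\cap e'|>1,\ J_0\in\mathcal{J}^{e\cap e'}\Big\}\] and let $\mathrm{MC}^H_T$ be the set defined by the same constraints except that the last family of equalities is imposed only for pairs with $\{e,e'\}\in\mathcal{E}$ (and $|e\cap e'|>1$, $J_0\in\mathcal{J}^{e\cap e'}$). Then $\mathrm{MC}^H_\cap=\mathrm{MC}^H_T$.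
   Context: Let $n$ be a positive integer, $[n]=\{1,\dots,n\}$. A hypergraph $H=(V,E)$ here has as vertex set $V$ a family of pairwise disjoint subsets of $[n]$, each of cardinality at least $2$, and hyperedge set $E$ consisting of subsets $e\subseteq V$ with $|e|\ge 2$. Write $L(V)=\{\{I\}: I\in V\}$. For a nonempty $e\subseteq V$, $\mathcal{J}^e$ denotes the family of sets $J\subseteq \bigcup_{I\in e} I$ with $|J\cap I|=1$ for every $I\in e$. Let $\mathcal{J}^H=\bigcup_{e\in L(V)\cup E}\mathcal{J}^e$. For $w\in\mathbb{R}^{\mathcal{J}^H}$ write $w_i=w_{\{i\}}$ and $w(A)=\sum_{i\in A}w_i$. A join tree of $H$ is a tree $T$ with node set $E$ such that for any two distinct nodes $e_1,e_2$, every node $e$ on the unique path in $T$ between them satisfies $e_1\cap e_2\subseteq e$. $H$ is $\alpha$-acyclic in the sense of Fagin; equivalently (Beeri et al.) $H$ admits a join tree. *)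

theory Defs
  imports Complex_Main
begin

text \<open>Vertices are sets of naturals, hyperedges are sets of vertices,
  weight vectors are real functions on sets of naturals (index sets J).\<close>

definition hypergraph :: "nat \<Rightarrow> nat set set \<Rightarrow> nat set set set \<Rightarrow> bool" where
  "hypergraph n V E \<longleftrightarrow>
     (\<forall>I\<in>V. I \<subseteq> {1..n} \<and> card I \<ge> 2) \<and>
     (\<forall>I\<in>V. \<forall>I'\<in>V. I \<noteq> I' \<longrightarrow> I \<inter> I' = {}) \<and>
     (\<forall>e\<in>E. e \<subseteq> V \<and> card e \<ge> 2)"

definition Jfam :: "nat set set \<Rightarrow> nat set set" where
  "Jfam e = {J. J \<subseteq> \<Union>e \<and> (\<forall>I\<in>e. card (J \<inter> I) = 1)}"

definition LV :: "nat set set \<Rightarrow> nat set set set" where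
  "LV V = {{I} | I. I \<in> V}"

definition JH :: "nat set set \<Rightarrow> nat set set set \<Rightarrow> nat set set" where
  "JH V E = \<Union> (Jfam ` (LV V \<union> E))"

definition is_path :: "'a set \<Rightarrow> 'a set set \<Rightarrow> 'a \<Rightarrow> 'a \<Rightarrow> 'a list \<Rightarrow> bool" where
  "is_path N F a b p \<longleftrightarrow> p \<noteq> [] \<and> hd p = a \<and> last p = b \<and> distinct p \<and> set p \<subseteq> N \<and>
     (\<forall>i. Suc i < length p \<longrightarrow> {p ! i, p ! Suc i} \<in> F)"

definition is_tree :: "'a set \<Rightarrow> 'a set set \<Rightarrow> bool" where
  "is_tree N F \<longleftrightarrow> (\<forall>f\<in>F. \<exists>x y. x \<in> N \<and> y \<in> N \<and> x \<noteq> y \<and> f = {x, y}) \<and>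
     (\<forall>a\<in>N. \<forall>b\<in>N. \<exists>!p. is_path N F a b p)"

definition join_tree :: "nat set set set \<Rightarrow> nat set set set set \<Rightarrow> bool" where
  "join_tree E F \<longleftrightarrow> is_tree E F \<and>
     (\<forall>e1\<in>E. \<forall>e2\<in>E. e1 \<noteq> e2 \<longrightarrow>
        (\<forall>p. is_path E F e1 e2 p \<longrightarrow> (\<forall>e\<in>set p. e1 \<inter> e2 \<subseteq> e)))"

text \<open>alpha-acyclicity, via the Beeri et al. characterisation given in the context.\<close>
definition alpha_acyclic :: "nat set set \<Rightarrow> nat set set set \<Rightarrow> bool" where
  "alpha_acyclic V E \<longleftrightarrow> (\<exists>F. join_tree E F)"

definition MC_gen :: "nat set set \<Rightarrow> nat set set set \<Rightarrow> (nat set set \<Rightarrow> nat set set \<Rightarrow> bool)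
                      \<Rightarrow> (nat set \<Rightarrow> real) set" where
  "MC_gen V E P = {w.
     (\<forall>J. J \<notin> JH V E \<longrightarrow> w J = 0) \<and>
     (\<forall>J\<in>JH V E. w J \<ge> 0) \<and>
     (\<forall>I\<in>V. (\<Sum>i\<in>I. w {i}) = 1) \<and>
     (\<forall>e\<in>E. \<forall>I\<in>e. \<forall>i\<in>I. w {i} - (\<Sum>J\<in>{J\<in>Jfam e. i \<in> J}. w J) = 0) \<and>
     (\<forall>e\<in>E. \<forall>e'\<in>E. P e e' \<and> card (e \<inter> e') > 1 \<longrightarrow>
        (\<forall>J0\<in>Jfam (e \<inter> e').
           (\<Sum>J\<in>{J\<in>Jfam e. J0 \<subseteq> J}. w J) - (\<Sum>J\<in>{J\<in>Jfam e'. J0 \<subseteq> J}. w J) = 0))}"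

definition MC_cap :: "nat set set \<Rightarrow> nat set set set \<Rightarrow> (nat set \<Rightarrow> real) set" where
  "MC_cap V E = MC_gen V E (\<lambda>e e'. True)"

definition MC_T :: "nat set set \<Rightarrow> nat set set set \<Rightarrow> nat set set set set \<Rightarrow> (nat set \<Rightarrow> real) set" where
  "MC_T V E F = MC_gen V E (\<lambda>e e'. {e, e'} \<in> F)"

end

theory Submission
  imports Defs
begin

lemma Jfam_restrict:
  assumes J: "J \<in> Jfam f" and S: "S' \<subseteq> f" and J1: "J1 \<in> Jfam S'" and sub: "J1 \<subseteq> J"
  shows "J \<inter> \<Union>S' = J1"
proof
  show "J1 \<subseteq> J \<inter> \<Union>S'" using sub J1 unfolding Jfam_def by auto
next
  show "J \<inter> \<Union>S' \<subseteq> J1"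
  proof
    fix x assume x: "x \<in> J \<inter> \<Union>S'"
    then obtain I where I: "I \<in> S'" "x \<in> I" by auto
    have c1: "card (J \<inter> I) = 1" using J S I unfolding Jfam_def by auto
    have c2: "card (J1 \<inter> I) = 1" using J1 I unfolding Jfam_def by auto
    obtain a where a: "J \<inter> I = {a}" using c1 card_1_singletonE by blast
    obtain b where b: "J1 \<inter> I = {b}" using c2 card_1_singletonE by blast
    have "b \<in> J \<inter> I" using b sub by blast
    then have "J1 \<inter> I = J \<inter> I" using a b by simp
    then show "x \<in> J1" using x I by auto
  qed
qed

lemma marg:
  assumes fin: "finite (\<Union>f)" and S: "S' \<subseteq> f" and J0: "J0 \<subseteq> \<Union>S'"
  shows "(\<Sum>J\<in>{J\<in>Jfam f. J0 \<subseteq> J}. w J) =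
         (\<Sum>J1\<in>{J1\<in>Jfam S'. J0 \<subseteq> J1}. \<Sum>J\<in>{J\<in>Jfam f. J1 \<subseteq> J}. w J)"
proof -
  let ?A = "{J\<in>Jfam f. J0 \<subseteq> J}"
  let ?B = "{J1\<in>Jfam S'. J0 \<subseteq> J1}"
  have fA: "finite ?A"
    by (rule finite_subset[of _ "Pow (\<Union>f)"]) (auto simp: Jfam_def fin)
  have fB: "finite ?B"
    by (rule finite_subset[of _ "Pow (\<Union>f)"]) (use S in \<open>unfold Jfam_def, blast, simp add: fin\<close>)
  have img: "(\<lambda>J. J \<inter> \<Union>S') ` ?A \<subseteq> ?B"
  proof
    fix K assume "K \<in> (\<lambda>J. J \<inter> \<Union>S') ` ?A"
    then obtain J where J: "J \<in> Jfam f" "J0 \<subseteq> J" and K: "K = J \<inter> \<Union>S'" by auto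
    have "\<forall>I\<in>S'. card (K \<inter> I) = 1"
    proof
      fix I assume I: "I \<in> S'"
      then have "K \<inter> I = J \<inter> I" using K by auto
      then show "card (K \<inter> I) = 1" using J I S unfolding Jfam_def by auto
    qed
    then show "K \<in> ?B" using K J J0 unfolding Jfam_def by auto
  qed
  have fib: "{J \<in> ?A. J \<inter> \<Union>S' = J1} = {J\<in>Jfam f. J1 \<subseteq> J}" if J1: "J1 \<in> ?B" for J1
  proof
    show "{J \<in> ?A. J \<inter> \<Union>S' = J1} \<subseteq> {J\<in>Jfam f. J1 \<subseteq> J}" by auto
  next
    show "{J\<in>Jfam f. J1 \<subseteq> J} \<subseteq> {J \<in> ?A. J \<inter> \<Union>S' = J1}"
    proof
      fix J assume J: "J \<in> {J\<in>Jfam f. J1 \<subseteq> J}"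
      then have "J \<inter> \<Union>S' = J1" using Jfam_restrict[of J f S' J1] S J1 by auto
      then show "J \<in> {J \<in> ?A. J \<inter> \<Union>S' = J1}" using J J1 by auto
    qed
  qed
  have "(\<Sum>J\<in>?A. w J) = (\<Sum>J1\<in>?B. \<Sum>J\<in>{J \<in> ?A. J \<inter> \<Union>S' = J1}. w J)"
    using sum.group[OF fA fB img, of w] by simp
  also have "\<dots> = (\<Sum>J1\<in>?B. \<Sum>J\<in>{J\<in>Jfam f. J1 \<subseteq> J}. w J)"
  proof (rule sum.cong[OF refl])
    fix J1 assume "J1 \<in> ?B"
    then show "(\<Sum>J\<in>{J \<in> ?A. J \<inter> \<Union>S' = J1}. w J) = (\<Sum>J\<in>{J\<in>Jfam f. J1 \<subseteq> J}. w J)"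
      using fib by presburger
  qed
  finally show ?thesis .
qed

lemma chain_eq:
  assumes "p \<noteq> []" "\<forall>i. Suc i < length p \<longrightarrow> m (p ! i) = m (p ! Suc i)"
  shows "m (hd p) = (m (last p) :: real)"
  using assms
proof (induction p)
  case Nil then show ?case by simp
next
  case (Cons a p)
  show ?case
  proof (cases "p = []")
    case True then show ?thesis by simp
  next
    case False
    have h: "\<forall>i. Suc i < length p \<longrightarrow> m (p ! i) = m (p ! Suc i)"
    proof (intro allI impI)
      fix i assume "Suc i < length p"
      then show "m (p ! i) = m (p ! Suc i)" using Cons.prems(2)[rule_format, of "Suc i"] by simp
    qed
    have "m a = m (hd p)" using Cons.prems(2)[rule_format, of 0] False
      by (simp add: hd_conv_nth)
    then show ?thesis using Cons.IH[OF False h] False by simp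
  qed
qed

theorem lemma5p3:
  fixes n :: nat and V :: "nat set set" and E :: "nat set set set"
    and F :: "nat set set set set"
  assumes "hypergraph n V E"
    and "alpha_acyclic V E"
    and "join_tree E F"
  shows "MC_cap V E = MC_T V E F"
proof
  show "MC_cap V E \<subseteq> MC_T V E F" unfolding MC_cap_def MC_T_def MC_gen_def by auto
next
  have hV: "\<forall>I\<in>V. I \<subseteq> {1..n}" and hE: "\<forall>e\<in>E. e \<subseteq> V"
    using assms(1) unfolding hypergraph_def by auto
  have finV: "finite V"
    by (rule finite_subset[of _ "Pow {1..n}"]) (use hV in auto)
  have finU: "finite (\<Union>f)" if "f \<in> E" for f
    by (rule finite_subset[of _ "{1..n}"]) (use hV hE that in auto)
  have tree: "is_tree E F" and jt: "\<And>e1 e2 p x. e1 \<in> E \<Longrightarrow> e2 \<in> E \<Longrightarrow> e1 \<noteq> e2 \<Longrightarrow>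
      is_path E F e1 e2 p \<Longrightarrow> x \<in> set p \<Longrightarrow> e1 \<inter> e2 \<subseteq> x"
    using assms(3) unfolding join_tree_def by blast+
  show "MC_T V E F \<subseteq> MC_cap V E"
  proof
    fix w assume w: "w \<in> MC_T V E F"
    let ?m = "\<lambda>f J0. (\<Sum>J\<in>{J\<in>Jfam f. J0 \<subseteq> J}. w J)"
    have wT: "\<And>e e' J0. e \<in> E \<Longrightarrow> e' \<in> E \<Longrightarrow> {e, e'} \<in> F \<Longrightarrow> card (e \<inter> e') > 1 \<Longrightarrow>
        J0 \<in> Jfam (e \<inter> e') \<Longrightarrow> ?m e J0 = ?m e' J0"
      using w unfolding MC_T_def MC_gen_def by auto
    have key: "?m e J0 = ?m e' J0" if e: "e \<in> E" "e' \<in> E" "card (e \<inter> e') > 1"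
      "J0 \<in> Jfam (e \<inter> e')" for e e' J0
    proof (cases "e = e'")
      case True then show ?thesis by simp
    next
      case False
      let ?S = "e \<inter> e'"
      have "\<forall>a\<in>E. \<forall>b\<in>E. \<exists>!p. is_path E F a b p" using tree unfolding is_tree_def by (rule conjunct2)
      then have "\<exists>!p. is_path E F e e' p" using e(1,2) by blast
      then obtain p where p: "is_path E F e e' p" by (rule ex1E)
      have pE: "set p \<subseteq> E" and pne: "p \<noteq> []" and hd: "hd p = e" and lst: "last p = e'"
        and pF: "\<And>i. Suc i < length p \<Longrightarrow> {p ! i, p ! Suc i} \<in> F"
        using p unfolding is_path_def by auto
      have pS: "\<And>x. x \<in> set p \<Longrightarrow> ?S \<subseteq> x" using jt[OF e(1,2) False p] by blast
      have J0S: "J0 \<subseteq> \<Union>?S" using e(4) unfolding Jfam_def by auto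
      have step: "\<forall>i. Suc i < length p \<longrightarrow> (\<lambda>f. ?m f J0) (p ! i) = (\<lambda>f. ?m f J0) (p ! Suc i)"
      proof (intro allI impI)
        fix i assume i: "Suc i < length p"
        define a where "a = p ! i"
        define b where "b = p ! Suc i"
        have aset: "a \<in> set p" "b \<in> set p" using i unfolding a_def b_def by auto
        have aE: "a \<in> E" "b \<in> E" using aset pE by auto
        have Sab: "?S \<subseteq> a \<inter> b" using pS aset by auto
        have fab: "finite (a \<inter> b)" using finV hE aE by (meson finite_subset inf.coboundedI1)
        have cab: "card (a \<inter> b) > 1" using card_mono[OF fab Sab] e(3) by linarith
        have ab: "{a, b} \<in> F" using pF[OF i] unfolding a_def b_def .
        have J0ab: "J0 \<subseteq> \<Union>(a \<inter> b)" using J0S Union_mono[OF Sab] by (rule order_trans)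
        have "?m a J0 = (\<Sum>J1\<in>{J1\<in>Jfam (a \<inter> b). J0 \<subseteq> J1}. ?m a J1)"
          by (rule marg[OF finU[OF aE(1)] Int_lower1 J0ab])
        also have "\<dots> = (\<Sum>J1\<in>{J1\<in>Jfam (a \<inter> b). J0 \<subseteq> J1}. ?m b J1)"
          by (rule sum.cong) (use wT[OF aE ab cab] in auto)
        also have "\<dots> = ?m b J0"
          by (rule marg[OF finU[OF aE(2)] Int_lower2 J0ab, symmetric])
        finally show "(\<lambda>f. ?m f J0) (p ! i) = (\<lambda>f. ?m f J0) (p ! Suc i)"
          unfolding a_def b_def by simp
      qed
      show ?thesis using chain_eq[OF pne step] hd lst by simp
    qed
    have key2: "\<forall>e\<in>E. \<forall>e'\<in>E. True \<and> card (e \<inter> e') > 1 \<longrightarrow>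
        (\<forall>J0\<in>Jfam (e \<inter> e'). ?m e J0 - ?m e' J0 = 0)"
      using key by simp
    show "w \<in> MC_cap V E"
      using w key2 unfolding MC_T_def MC_cap_def MC_gen_def mem_Collect_eq by (elim conjE, intro conjI)
  qed
qed

end
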